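(* Let $R=\mathbb{F}_q+v\mathbb{F}_q+v^2\mathbb{F}_q$ with $v^3=v$, $q$ a prime power. There exists a self-dual cyclic code of length $n$ over $R$ if and only if $q$ is a power of $2$ and $n$ is even.
   Context: $R=\mathbb{F}_q[v]/\langle v^3-v\rangle$. A linear code of length $n$ over $R$ is an $R$-submodule of $R^n$; it is cyclic if $(c_{n-1},c_0,\dots,c_{n-2})\in C$ whenever $(c_0,\dots,c_{n-1})\in C$, and self-dual if $C=C^\perp$, where $C^\perp=\{x\in R^n:\sum_i x_iy_i=0\ \forall y\in C\}$. *)

theory Defs
  imports "HOL-Computational_Algebra.Polynomial"
begin

text \<open>The ring R = F_q[v]/(v^3 - v), with F_q a finite field (type 'a).\<close>

definition vpoly :: "'a::comm_ring_1 poly" where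
  "vpoly = [:0, -1, 0, 1:]"

definition Rset :: "'a::field poly set" where
  "Rset = {p. degree p < 3}"

definition rmul :: "'a::field poly \<Rightarrow> 'a poly \<Rightarrow> 'a poly" where
  "rmul p q = (p * q) mod vpoly"

definition words :: "nat \<Rightarrow> (nat \<Rightarrow> 'a::field poly) set" where
  "words n = {x. (\<forall>i<n. x i \<in> Rset) \<and> (\<forall>i\<ge>n. x i = 0)}"

definition linear_code :: "nat \<Rightarrow> (nat \<Rightarrow> 'a::field poly) set \<Rightarrow> bool" where
  "linear_code n C \<longleftrightarrow> C \<subseteq> words n \<and> (\<lambda>i. 0) \<in> C
     \<and> (\<forall>x\<in>C. \<forall>y\<in>C. (\<lambda>i. x i + y i) \<in> C)
     \<and> (\<forall>r\<in>Rset. \<forall>x\<in>C. (\<lambda>i. rmul r (x i)) \<in> C)"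

definition cyc_shift :: "nat \<Rightarrow> (nat \<Rightarrow> 'a::zero) \<Rightarrow> (nat \<Rightarrow> 'a)" where
  "cyc_shift n x = (\<lambda>i. if i < n then x ((i + n - 1) mod n) else 0)"

definition cyclic_code :: "nat \<Rightarrow> (nat \<Rightarrow> 'a::field poly) set \<Rightarrow> bool" where
  "cyclic_code n C \<longleftrightarrow> (\<forall>x\<in>C. cyc_shift n x \<in> C)"

definition inner :: "nat \<Rightarrow> (nat \<Rightarrow> 'a::field poly) \<Rightarrow> (nat \<Rightarrow> 'a poly) \<Rightarrow> 'a poly" where
  "inner n x y = (\<Sum>i<n. x i * y i) mod vpoly"

definition dual_code :: "nat \<Rightarrow> (nat \<Rightarrow> 'a::field poly) set \<Rightarrow> (nat \<Rightarrow> 'a poly) set" where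
  "dual_code n C = {x \<in> words n. \<forall>y\<in>C. inner n x y = 0}"

definition self_dual :: "nat \<Rightarrow> (nat \<Rightarrow> 'a::field poly) set \<Rightarrow> bool" where
  "self_dual n C \<longleftrightarrow> C = dual_code n C"

end

theory Submission
  imports Defs "HOL-Computational_Algebra.Primes"
begin


definition fw :: "nat \<Rightarrow> (nat \<Rightarrow> 'a::field) set" where
  "fw n = {x. \<forall>i\<ge>n. x i = 0}"
definition fin :: "nat \<Rightarrow> (nat \<Rightarrow> 'a::field) \<Rightarrow> (nat \<Rightarrow> 'a) \<Rightarrow> 'a" where
  "fin n x y = (\<Sum>i<n. x i * y i)"
definition fdual :: "nat \<Rightarrow> (nat \<Rightarrow> 'a::field) set \<Rightarrow> (nat \<Rightarrow> 'a) set" where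
  "fdual n C = {x \<in> fw n. \<forall>y\<in>C. fin n x y = 0}"
definition shk :: "nat \<Rightarrow> nat \<Rightarrow> (nat \<Rightarrow> 'a::zero) \<Rightarrow> (nat \<Rightarrow> 'a)" where
  "shk n k x = (\<lambda>i. if i < n then x ((i + k * (n - 1)) mod n) else 0)"
definition Pv :: "nat \<Rightarrow> (nat \<Rightarrow> 'a::field) \<Rightarrow> 'a poly" where
  "Pv n c = (\<Sum>i<n. monom (c i) i)"
definition Qv :: "nat \<Rightarrow> (nat \<Rightarrow> 'a::field) \<Rightarrow> 'a poly" where
  "Qv n c = (\<Sum>i<n. monom (c i) (n - 1 - i))"
definition corr :: "nat \<Rightarrow> (nat \<Rightarrow> 'a::field) \<Rightarrow> (nat \<Rightarrow> 'a) \<Rightarrow> nat \<Rightarrow> 'a" where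
  "corr n c e l = (\<Sum>i<n. c i * e ((i + (n - 1) - l) mod n))"
definition NN :: "nat \<Rightarrow> 'a::field poly" where
  "NN n = [:0,1:]^n - 1"

lemma shk_Suc:
  assumes "x \<in> fw n"
  shows "shk n (Suc k) x = cyc_shift n (shk n k x)"
proof
  fix i
  show "shk n (Suc k) x i = cyc_shift n (shk n k x) i"
  proof (cases "i < n")
    case True
    then have "n > 0" by auto
    have e: "i + Suc k * (n - 1) = (i + n - 1) + k * (n - 1)" using \<open>n>0\<close> by simp
    have "(i + Suc k * (n - 1)) mod n = ((i + n - 1) mod n + k * (n - 1)) mod n"
      unfolding e by (simp add: mod_add_left_eq)
    with True \<open>n>0\<close> show ?thesis by (simp add: shk_def cyc_shift_def)
  qed (simp add: shk_def cyc_shift_def)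
qed

lemma shk_0: "x \<in> fw n \<Longrightarrow> shk n 0 x = x"
  by (auto simp: shk_def fw_def fun_eq_iff)

lemma shk_closed:
  assumes "\<forall>x\<in>C. cyc_shift n x \<in> C" "C \<subseteq> fw n" "x \<in> C"
  shows "shk n k x \<in> C"
proof (induction k)
  case 0
  have "x \<in> fw n" using assms by auto
  then show ?case using assms shk_0[of x n] by auto
next
  case (Suc k)
  have "x \<in> fw n" using assms by auto
  then show ?case using Suc assms(1) shk_Suc by metis
qed

lemma mod_invol:
  fixes i j n :: nat
  assumes "i < n" "j < n"
  shows "(i + (n - 1) - (i + (n - 1) - j) mod n) mod n = j"
proof (cases "i + (n - 1) - j < n")
  case True
  then have "(i + (n - 1) - j) mod n = i + (n - 1) - j" by (rule mod_less)
  moreover have "i + (n - 1) - (i + (n - 1) - j) = j" using assms by auto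
  ultimately show ?thesis using assms by simp
next
  case False
  then have "(i + (n - 1) - j) mod n = i + (n - 1) - j - n"
    using assms by (simp add: le_mod_geq)
  moreover have "i + (n - 1) - (i + (n - 1) - j - n) = j + n" using False assms by auto
  ultimately show ?thesis using assms by simp
qed

lemma mod_invol':
  fixes i j n :: nat
  assumes "i < n" "j < n"
  shows "(i + n - Suc ((i + n - Suc j) mod n)) mod n = j"
  using mod_invol[OF assms] assms by simp

lemma shk_corr:
  assumes "l < n" "i < n"
  shows "shk n (Suc l) e i = e ((i + (n - 1) - l) mod n)"
proof -
  have "Suc l * (n - 1) = (n - 1 - l) + l * n"
  proof -
    have "Suc l * (n - 1) = (n - 1) + l * (n - 1)" by simp
    also have "l * (n - 1) = l * n - l" by (simp add: diff_mult_distrib2)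
    finally show ?thesis using assms by (simp add: algebra_simps)
  qed
  then have "(i + Suc l * (n - 1)) mod n = (i + (n - 1 - l)) mod n"
    by (simp add: add.assoc[symmetric])
  also have "i + (n - 1 - l) = i + (n - 1) - l" using assms by auto
  finally show ?thesis using assms by (simp add: shk_def)
qed

lemma NN_dvd_pow: "NN n dvd ([:0,1:]^n)^k - (1::'a::field poly)"
proof -
  have "([:0,1:]^n)^k - (1::'a poly) = ([:0,1:]^n - 1) * (\<Sum>i<k. ([:0,1:]^n)^i)"
    by (rule power_diff_1_eq)
  then show ?thesis unfolding NN_def by (metis dvd_triv_left)
qed

lemma monom_mod_dvd:
  assumes "n > 0"
  shows "NN n dvd (monom (a::'a::field) t - monom a (t mod n))"
proof -
  have "t = t mod n + n * (t div n)" by simp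
  then have "[:0,1:]^t = [:0,1::'a:]^(t mod n) * ([:0,1:]^n)^(t div n)"
    by (metis power_add power_mult)
  then have "monom a t - monom a (t mod n) = smult a ([:0,1:]^(t mod n) * (([:0,1:]^n)^(t div n) - 1))"
    by (simp add: monom_altdef algebra_simps smult_diff_right)
  moreover have "NN n dvd smult a ([:0,1:]^(t mod n) * (([:0,1:]^n)^(t div n) - 1))"
    using NN_dvd_pow by (metis dvd_mult dvd_smult)
  ultimately show ?thesis by simp
qed

lemma PQ_expand:
  "Pv n c * Qv n e = (\<Sum>i<n. \<Sum>j<n. monom (c i * e j) (i + (n - 1) - j))"
proof -
  have "Pv n c * Qv n e = (\<Sum>i<n. \<Sum>j<n. monom (c i) i * monom (e j) (n - 1 - j))"
    unfolding Pv_def Qv_def by (rule sum_product)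
  also have "\<dots> = (\<Sum>i<n. \<Sum>j<n. monom (c i * e j) (i + (n - 1) - j))"
    by (intro sum.cong refl) (auto simp: mult_monom)
  finally show ?thesis .
qed

lemma S_expand:
  "(\<Sum>l<n. monom (corr n c e l) l) = (\<Sum>i<n. \<Sum>j<n. monom (c i * e j) ((i + (n - 1) - j) mod n))"
proof -
  have "(\<Sum>l<n. monom (corr n c e l) l) = (\<Sum>l<n. \<Sum>i<n. monom (c i * e ((i + (n - 1) - l) mod n)) l)"
    unfolding corr_def by (simp add: monom_sum)
  also have "\<dots> = (\<Sum>i<n. \<Sum>l<n. monom (c i * e ((i + (n - 1) - l) mod n)) l)"
    by (rule sum.swap)
  also have "\<dots> = (\<Sum>i<n. \<Sum>j<n. monom (c i * e j) ((i + (n - 1) - j) mod n))"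
  proof (rule sum.cong[OF refl])
    fix i assume i: "i \<in> {..<n}"
    show "(\<Sum>l<n. monom (c i * e ((i + (n - 1) - l) mod n)) l) = (\<Sum>j<n. monom (c i * e j) ((i + (n - 1) - j) mod n))"
      by (rule sum.reindex_bij_witness[of _ "\<lambda>j. (i + (n - 1) - j) mod n" "\<lambda>j. (i + (n - 1) - j) mod n"])
         (use i in \<open>auto simp: mod_invol'\<close>)
  qed
  finally show ?thesis .
qed

lemma coeff_S: "coeff (\<Sum>l<n. monom (f l) l) k = (if k < n then f k else 0)"
  by (simp add: coeff_sum)

lemma corr_iff:
  assumes "n > 0"
  shows "NN n dvd Pv n c * Qv n e \<longleftrightarrow> (\<forall>l<n. corr n c e l = 0)"
proof -
  define S where "S = (\<Sum>l<n. monom (corr n c e l) l)"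
  have "NN n dvd Pv n c * Qv n e - S"
    unfolding PQ_expand S_def S_expand sum_subtractf[symmetric]
    by (intro dvd_sum monom_mod_dvd assms)
  then have 1: "NN n dvd Pv n c * Qv n e \<longleftrightarrow> NN n dvd S"
    by (metis dvd_add_right_iff diff_add_cancel)
  have degN: "degree (NN n :: 'a poly) = n"
  proof -
    have "degree ([:0,1::'a:]^n + (-1)) = n"
      using assms by (subst degree_add_eq_left) (simp_all add: degree_linear_power)
    then show ?thesis unfolding NN_def by simp
  qed
  have cS: "coeff S k = (if k < n then corr n c e k else 0)" for k
    unfolding S_def by (rule coeff_S)
  have degS: "degree S < n"
  proof -
    have "degree S \<le> n - 1" by (rule degree_le) (use assms in \<open>auto simp: cS\<close>)
    then show ?thesis using assms by simp
  qed
  have 2: "NN n dvd S \<longleftrightarrow> S = 0"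
  proof
    assume "NN n dvd S"
    show "S = 0"
    proof (rule ccontr)
      assume "S \<noteq> 0"
      with dvd_imp_degree_le[OF \<open>NN n dvd S\<close>] degN degS show False by simp
    qed
  qed simp
  have 3: "S = 0 \<longleftrightarrow> (\<forall>l<n. corr n c e l = 0)"
    by (auto simp: poly_eq_iff cS)
  show ?thesis using 1 2 3 by simp
qed



lemma reflect_lin: "reflect_poly [:-1,1::'a::field:] = smult (-1) [:-1,1:]"
  by (rule poly_eqI) (auto simp: coeff_reflect_poly coeff_pCons split: nat.split)

definition rv :: "nat \<Rightarrow> (nat \<Rightarrow> 'a::zero) \<Rightarrow> (nat \<Rightarrow> 'a)" where
  "rv n c = (\<lambda>j. if j < n then c (n - 1 - j) else 0)"

lemma Qv_rv: "Qv n (rv n c) = Pv n c"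
  unfolding Qv_def Pv_def rv_def
  by (rule sum.reindex_bij_witness[of _ "\<lambda>j. n - 1 - j" "\<lambda>j. n - 1 - j"]) auto

lemma Pv_rv: "Pv n (rv n c) = Qv n c"
  unfolding Qv_def Pv_def rv_def
  by (rule sum.reindex_bij_witness[of _ "\<lambda>j. n - 1 - j" "\<lambda>j. n - 1 - j"]) auto

lemma coeff_Pv: "coeff (Pv n c) k = (if k < n then c k else 0)"
  unfolding Pv_def by (rule coeff_S)

lemma degree_Pv: "n > 0 \<Longrightarrow> degree (Pv n c) < n"
proof -
  assume n: "n > 0"
  have "degree (Pv n c) \<le> n - 1" by (rule degree_le) (auto simp: coeff_Pv)
  then show ?thesis using n by simp
qed

lemma Qv_reflect:
  assumes n: "n > 0"
  shows "Qv n c = monom 1 (n - 1 - degree (Pv n c)) * reflect_poly (Pv n c)"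
proof (rule poly_eqI)
  fix k
  define d where "d = degree (Pv n c)"
  have dn: "d < n" using degree_Pv[OF n] d_def by simp
  have lhs: "coeff (Qv n c) k = (if k < n then c (n - 1 - k) else 0)"
    by (simp add: Pv_rv[symmetric] coeff_Pv rv_def)
  have hi: "coeff (Pv n c) j = 0" if "j > d" for j
    using that d_def coeff_eq_0 by blast
  show "coeff (Qv n c) k = coeff (monom 1 (n - 1 - degree (Pv n c)) * reflect_poly (Pv n c)) k"
  proof (cases "k < n - 1 - d")
    case True
    have "c (n - 1 - k) = coeff (Pv n c) (n - 1 - k)" using True by (simp add: coeff_Pv)
    also have "\<dots> = 0" using True by (intro hi) auto
    finally show ?thesis using True lhs by (simp add: coeff_monom_mult d_def[symmetric])
  next
    case False
    have "coeff (monom 1 (n - 1 - d) * reflect_poly (Pv n c)) k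
        = coeff (reflect_poly (Pv n c)) (k - (n - 1 - d))"
      using False by (simp add: coeff_monom_mult)
    also have "\<dots> = (if k < n then c (n - 1 - k) else 0)"
    proof (cases "k < n")
      case True
      then have "d - (k - (n - 1 - d)) = n - 1 - k" using False dn by auto
      then show ?thesis using True False dn
        by (auto simp: coeff_reflect_poly d_def[symmetric] coeff_Pv)
    next
      case False2: False
      then show ?thesis using False dn
        by (auto simp: coeff_reflect_poly d_def[symmetric])
    qed
    finally show ?thesis using lhs by (simp add: d_def)
  qed
qed

lemma dvd_reflect:
  assumes "[:-1,1::'a::field:]^k dvd p"
  shows "[:-1,1:]^k dvd reflect_poly p"
proof -
  obtain g where "p = [:-1,1:]^k * g" using assms by blast
  then have "reflect_poly p = (smult (-1) [:-1,1:])^k * reflect_poly g"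
    by (simp add: reflect_poly_mult reflect_poly_power reflect_lin)
  also have "\<dots> = smult ((-1)^k) ([:-1,1:]^k * reflect_poly g)"
    by (simp only: smult_power mult_smult_left)
  also have "\<dots> = [:-1,1:]^k * smult ((-1)^k) (reflect_poly g)"
    by (simp only: mult_smult_right)
  finally show ?thesis by (rule dvdI)
qed

lemma order_le_Q:
  assumes n: "n > 0" and P: "Pv n c \<noteq> 0"
  shows "Qv n c \<noteq> 0 \<and> order 1 (Pv n c) \<le> order 1 (Qv n c)"
proof -
  have Q: "Qv n c = monom 1 (n - 1 - degree (Pv n c)) * reflect_poly (Pv n c)"
    by (rule Qv_reflect[OF n])
  have nz: "Qv n c \<noteq> 0" using P unfolding Q by (simp add: monom_eq_0_iff)
  have "[:-1,1:]^(order 1 (Pv n c)) dvd Pv n c"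
    using order_divides[of 1 "order 1 (Pv n c)" "Pv n c"] by simp
  then have "[:-1,1:]^(order 1 (Pv n c)) dvd Qv n c"
    unfolding Q by (intro dvd_mult dvd_reflect)
  then show ?thesis using nz order_divides[of 1 "order 1 (Pv n c)" "Qv n c"] by simp
qed

lemma order_PQ:
  assumes n: "n > 0" and P: "Pv n c \<noteq> 0"
  shows "Qv n c \<noteq> 0 \<and> order 1 (Qv n c) = order 1 (Pv n c)"
proof -
  have 1: "Qv n c \<noteq> 0 \<and> order 1 (Pv n c) \<le> order 1 (Qv n c)" by (rule order_le_Q[OF n P])
  have "Pv n (rv n c) \<noteq> 0" using 1 Pv_rv by metis
  from order_le_Q[OF n this] have "order 1 (Qv n c) \<le> order 1 (Pv n c)"
    by (simp add: Pv_rv Qv_rv)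
  with 1 show ?thesis by simp
qed




lemma order_pow:
  assumes "(p::'a::field poly) \<noteq> 0"
  shows "order a (p ^ k) = k * order a p"
proof (induction k)
  case (Suc k)
  have "p ^ Suc k = p * p ^ k" by simp
  moreover have "p * p ^ k \<noteq> 0" using assms by simp
  ultimately show ?case using Suc by (simp add: order_mult)
qed simp

lemma minus_one_pow_char:
  assumes "prime CHAR('b::comm_ring_1)"
  shows "(-1::'b) ^ (CHAR('b) ^ a) = -1"
proof (induction a)
  case (Suc a)
  have "(-1::'b) ^ (CHAR('b) ^ Suc a) = ((-1) ^ (CHAR('b) ^ a)) ^ CHAR('b)"
    by (simp add: power_mult[symmetric] mult.commute)
  also have "\<dots> = (- 1) ^ CHAR('b)" using Suc by simp
  also have "\<dots> = - (1 ^ CHAR('b))" by (rule minus_power_prime_CHAR[OF refl assms])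
  finally show ?case by simp
qed simp

lemma order_NN:
  assumes n: "n > 0" and fin: "finite (UNIV :: 'a::field set)"
  shows "order 1 (NN n :: 'a poly) = CHAR('a) ^ multiplicity CHAR('a) n"
proof -
  define p where "p = CHAR('a)"
  have pp: "prime p" unfolding p_def
    using prime_CHAR_semidom finite_imp_CHAR_pos[OF fin] by blast
  define a where "a = multiplicity p n"
  have nz: "n \<noteq> 0" using n by simp
  have nu: "\<not> is_unit p" using prime_gt_1_nat[OF pp] by simp
  obtain m where m: "n = p ^ a * m" "\<not> p dvd m"
    unfolding a_def by (rule multiplicity_decompose'[OF nz nu])
  have ppoly: "prime CHAR('a poly)" using pp p_def by simp
  define X where "X = ([:0,1:] :: 'a poly)"
  have fd: "(X ^ m + (-1)) ^ (CHAR('a poly) ^ a) = (X^m)^(CHAR('a poly) ^ a) + (-1)^(CHAR('a poly) ^ a)"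
    by (rule freshmans_dream'[OF ppoly refl])
  have "(X ^ m - 1) ^ (p ^ a) = (X^m)^(p^a) + (-1)^(p^a)"
    using fd p_def by simp
  also have "(-1::'a poly)^(p^a) = -1"
    using minus_one_pow_char[OF ppoly, of a] p_def by simp
  also have "(X^m)^(p^a) = X ^ n" using m by (simp add: power_mult[symmetric] mult.commute)
  finally have NNe: "NN n = (X^m - 1)^(p^a)" unfolding NN_def X_def by simp
  have fac: "X^m - 1 = [:-1,1:] * (\<Sum>i<m. X^i)"
  proof -
    have xm1: "X - 1 = [:-1,1:]" by (simp add: X_def one_pCons)
    show ?thesis using power_diff_1_eq[of X m] unfolding xm1 .
  qed
  have G: "poly (\<Sum>i<m. X^i) 1 = of_nat m"
    by (simp add: X_def poly_sum)
  have Gnz: "poly (\<Sum>i<m. X^i) 1 \<noteq> 0"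
    unfolding G using m(2) p_def by (simp add: of_nat_eq_0_iff_char_dvd)
  then have Gnz': "(\<Sum>i<m. X^i) \<noteq> 0" by auto
  have o1: "order 1 (X^m - 1) = 1"
  proof -
    have "order 1 ([:-1,1:] * (\<Sum>i<m. X^i)) = order 1 [:-1,1::'a:] + order 1 (\<Sum>i<m. X^i)"
      by (rule order_mult, rule no_zero_divisors) (use Gnz' in simp_all)
    also have "order 1 [:-1,1::'a:] = 1" using order_power_n_n[of 1 1] by simp
    also have "order 1 (\<Sum>i<m. X^i) = 0" using Gnz by (rule order_0I)
    finally show ?thesis using fac by simp
  qed
  have "X^m - 1 \<noteq> 0" unfolding fac by (rule no_zero_divisors) (use Gnz' in simp_all)
  then have "order 1 (NN n :: 'a poly) = p^a * 1" unfolding NNe using o1 by (simp add: order_pow)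
  then show ?thesis using p_def a_def by simp
qed

lemma order_NN_even:
  assumes n: "n > 0" and fin: "finite (UNIV :: 'a::field set)"
    and ev: "even (order 1 (NN n :: 'a poly))"
  shows "CHAR('a) = 2 \<and> even n"
proof -
  define p where "p = CHAR('a)"
  have pp: "prime p" unfolding p_def
    using prime_CHAR_semidom finite_imp_CHAR_pos[OF fin] by blast
  define a where "a = multiplicity p n"
  have e: "even (p ^ a)" using ev order_NN[OF n fin] p_def a_def by simp
  then have "even p" and a0: "a > 0" using even_power by blast+
  have all: "\<forall>m. m dvd p \<longrightarrow> m = 1 \<or> m = p" using pp by (simp add: prime_nat_iff)
  have "2 = (1::nat) \<or> 2 = p" using all[rule_format, of 2] \<open>even p\<close> by simp
  then have p2: "p = 2" by simp
  have "p ^ a dvd n" unfolding a_def by (rule multiplicity_dvd)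
  moreover have "2 dvd p ^ a" using a0 p2 dvd_power[of a 2] by simp
  ultimately have "even n" using dvd_trans by blast
  then show ?thesis using p2 p_def by simp
qed




lemma degree_NN: "n > 0 \<Longrightarrow> degree (NN n :: 'a::field poly) = n"
proof -
  assume n: "n > 0"
  have "degree ([:0,1::'a:]^n + (-1)) = n"
    using n by (subst degree_add_eq_left) (simp_all add: degree_linear_power)
  then show ?thesis unfolding NN_def by simp
qed

lemma fin_comm: "fin n x y = fin n y x"
  unfolding fin_def by (simp add: mult.commute)

lemma corr_shk: "corr n c e l = fin n c (shk n (Suc l) e)" if "l < n"
  unfolding corr_def fin_def using that by (intro sum.cong refl) (simp add: shk_corr)

lemma corr_last: "n > 0 \<Longrightarrow> corr n c e (n - 1) = fin n c e"
  unfolding corr_def fin_def by (intro sum.cong refl) simp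

theorem field_level:
  fixes C :: "(nat \<Rightarrow> 'a::field) set"
  assumes n: "n > 0" and fin: "finite (UNIV :: 'a set)"
    and sd: "C = fdual n C" and cyc: "\<forall>x\<in>C. cyc_shift n x \<in> C"
  shows "CHAR('a) = 2 \<and> even n"
proof -
  have Cfw: "C \<subseteq> fw n" using sd unfolding fdual_def by blast
  have orth: "fin n x y = 0" if "x \<in> C" "y \<in> C" for x y
    using that sd unfolding fdual_def by blast
  define \<mu> where "\<mu> = order 1 (NN n :: 'a poly)"
  have claim1: "\<mu> \<le> 2 * order 1 (Pv n c)" if c: "c \<in> C" "Pv n c \<noteq> 0" for c
  proof -
    have "\<forall>l<n. corr n c c l = 0"
    proof (intro allI impI)
      fix l assume "l < n"
      have "shk n (Suc l) c \<in> C" by (rule shk_closed[OF cyc Cfw c(1)])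
      then have "fin n c (shk n (Suc l) c) = 0" using orth c(1) by blast
      then show "corr n c c l = 0" unfolding corr_shk[OF \<open>l<n\<close>] .
    qed
    then have "NN n dvd Pv n c * Qv n c" using corr_iff[OF n] by blast
    moreover have "[:-1,1:]^\<mu> dvd (NN n :: 'a poly)" unfolding \<mu>_def using order_1[of 1 "NN n"] by simp
    ultimately have d: "[:-1,1:]^\<mu> dvd Pv n c * Qv n c" using dvd_trans by blast
    have oq: "Qv n c \<noteq> 0 \<and> order 1 (Qv n c) = order 1 (Pv n c)" by (rule order_PQ[OF n c(2)])
    then have nz: "Pv n c * Qv n c \<noteq> 0" using c(2) by simp
    then have "\<mu> \<le> order 1 (Pv n c * Qv n c)" using d order_divides[of 1 \<mu> "Pv n c * Qv n c"] by auto
    also have "\<dots> = 2 * order 1 (Pv n c)" using order_mult[OF nz] oq by simp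
    finally show ?thesis .
  qed
  have NNnz: "NN n \<noteq> (0 :: 'a poly)" using degree_NN[OF n, where 'a='a] n by auto
  obtain u :: "'a poly" where u: "NN n = [:-1,1:]^\<mu> * u" "\<not> [:-1,1:] dvd u"
    using order_decomp[OF NNnz, of 1] unfolding \<mu>_def by blast
  have unz: "u \<noteq> 0" using u(2) by auto
  have mu1: "\<mu> \<ge> 1"
  proof -
    have "poly (NN n :: 'a poly) 1 = 0" by (simp add: NN_def)
    then show ?thesis using order_root[of "NN n :: 'a poly" 1] NNnz unfolding \<mu>_def by simp
  qed
  define s where "s = \<mu> div 2"
  define g where "g = [:-1,1::'a:]^s * u"
  have degN: "degree (NN n :: 'a poly) = \<mu> + degree u"
    unfolding u(1) using unz by (simp add: degree_mult_eq degree_linear_power)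
  have degg: "degree g < n"
  proof -
    have "degree g = s + degree u" unfolding g_def using unz by (simp add: degree_mult_eq degree_linear_power)
    then show ?thesis using degN degree_NN[OF n, where 'a='a] mu1 unfolding s_def by linarith
  qed
  define w0 where "w0 = (\<lambda>j. if j < n then coeff g j else 0)"
  have Pw0: "Pv n w0 = g"
    by (rule poly_eqI) (use degg in \<open>auto simp: coeff_Pv w0_def coeff_eq_0\<close>)
  define w where "w = rv n w0"
  have Qw: "Qv n w = g" unfolding w_def Qv_rv Pw0 ..
  have wfw: "w \<in> fw n" by (auto simp: w_def rv_def fw_def)
  have gnz: "g \<noteq> 0" unfolding g_def using unz by simp
  have wC: "w \<in> C"
  proof -
    have "w \<in> fdual n C"
      unfolding fdual_def
    proof (intro CollectI conjI ballI wfw)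
      fix y assume y: "y \<in> C"
      have "NN n dvd Pv n y * g"
      proof (cases "Pv n y = 0")
        case False
        have "\<mu> \<le> 2 * order 1 (Pv n y)" by (rule claim1[OF y False])
        then have "\<mu> - s \<le> order 1 (Pv n y)" unfolding s_def by linarith
        then obtain h where h: "Pv n y = [:-1,1:]^(\<mu> - s) * h"
          using order_divides[of 1 "\<mu> - s" "Pv n y"] by (auto elim: dvdE)
        have "Pv n y * g = [:-1,1:]^(\<mu> - s + s) * u * h"
          unfolding h g_def power_add by (simp add: algebra_simps)
        also have "\<mu> - s + s = \<mu>" unfolding s_def by simp
        finally have "Pv n y * g = NN n * h" unfolding u(1) by simp
        then show ?thesis by simp
      qed simp
      then have "\<forall>l<n. corr n y w l = 0" using corr_iff[OF n, of y w] Qw by simp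
      then have "corr n y w (n - 1) = 0" using n by simp
      then show "fin n w y = 0" using corr_last[OF n] fin_comm by metis
    qed
    then show ?thesis using sd by simp
  qed
  have Pwnz: "Pv n w \<noteq> 0"
  proof
    assume "Pv n w = 0"
    then have "\<forall>i<n. w i = 0" using coeff_Pv[of n w] by (metis coeff_0)
    then have "Qv n w = 0" unfolding Qv_def by simp
    then show False using Qw gnz by simp
  qed
  have "\<mu> \<le> 2 * order 1 (Pv n w)" by (rule claim1[OF wC Pwnz])
  also have "order 1 (Pv n w) = order 1 g" using order_PQ[OF n Pwnz] Qw by simp
  also have "order 1 g = s"
  proof -
    have "poly u 1 \<noteq> 0" using u(2) poly_eq_0_iff_dvd[of u 1] by simp
    then have "order 1 u = 0" by (rule order_0I)
    then show ?thesis unfolding g_def using unz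
      by (subst order_mult) (simp_all add: order_power_n_n[of 1, simplified])
  qed
  finally have "even \<mu>" unfolding s_def by presburger
  then show ?thesis using order_NN_even[OF n fin] unfolding \<mu>_def by blast
qed




lemma invol_even:
  assumes "finite A" "\<forall>x\<in>A. f x \<in> A \<and> f (f x) = x \<and> f x \<noteq> x"
  shows "even (card A)"
  using assms
proof (induction "card A" arbitrary: A rule: less_induct)
  case less
  show ?case
  proof (cases "A = {}")
    case False
    then obtain x where x: "x \<in> A" by blast
    define B where "B = A - {x, f x}"
    have fx: "f x \<in> A" "f x \<noteq> x" using less.prems x by auto
    have cB: "card A = card B + 2"
    proof -
      have "card B = card A - card {x, f x}" unfolding B_def
        using less.prems(1) x fx by (subst card_Diff_subset) auto
      moreover have "card {x, f x} = 2" using fx by simp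
      moreover have "card A \<ge> 2"
      proof -
        have "card {x, f x} \<le> card A" using less.prems(1) x fx by (intro card_mono) auto
        then show ?thesis using fx by simp
      qed
      ultimately show ?thesis by simp
    qed
    have "\<forall>y\<in>B. f y \<in> B \<and> f (f y) = y \<and> f y \<noteq> y"
    proof
      fix y assume y: "y \<in> B"
      have yA: "y \<in> A" "y \<noteq> x" "y \<noteq> f x" using y B_def by auto
      have "f y \<noteq> x" using yA less.prems(2) by metis
      moreover have "f y \<noteq> f x" using yA less.prems(2) x by metis
      ultimately show "f y \<in> B \<and> f (f y) = y \<and> f y \<noteq> y"
        using yA less.prems(2) B_def by auto
    qed
    moreover have "finite B" using less.prems(1) B_def by auto
    moreover have "card B < card A" using cB by simp
    ultimately have "even (card B)" using less.hyps by blast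
    then show ?thesis using cB by simp
  qed simp
qed

lemma card_pow2_char:
  assumes fin: "finite (UNIV :: 'a::field set)" and k: "card (UNIV :: 'a set) = 2 ^ k"
  shows "(2::'a) = 0"
proof (rule ccontr)
  assume two: "(2::'a) \<noteq> 0"
  have e: "even (card (UNIV - {0::'a}))"
  proof (rule invol_even[where f = uminus])
    show "finite (UNIV - {0::'a})" using fin by simp
    show "\<forall>x\<in>UNIV - {0::'a}. - x \<in> UNIV - {0} \<and> - (- x) = x \<and> - x \<noteq> x"
    proof
      fix x :: 'a assume "x \<in> UNIV - {0}"
      then have x: "x \<noteq> 0" by simp
      have "- x \<noteq> x"
      proof
        assume "- x = x"
        then have "2 * x = 0" by (metis mult_2 add_eq_0_iff)
        then show False using two x by simp
      qed
      then show "- x \<in> UNIV - {0} \<and> - (- x) = x \<and> - x \<noteq> x" using x by simp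
    qed
  qed
  have c: "card (UNIV :: 'a set) = card (UNIV - {0::'a}) + 1"
    using fin by (simp add: card_Diff_singleton card_gt_0_iff)
  have "odd (card (UNIV - {0::'a}) + 1)" using e by simp
  then have "odd (card (UNIV :: 'a set))" unfolding c .
  moreover have "card (UNIV :: 'a set) \<ge> 2"
  proof -
    have "card {0::'a, 1} \<le> card (UNIV :: 'a set)" using fin by (intro card_mono) auto
    then show ?thesis by simp
  qed
  ultimately show False using k by (cases k) auto
qed

definition ssums :: "'a::comm_monoid_add set \<Rightarrow> 'a set" where
  "ssums B = (\<lambda>S. \<Sum>S) ` Pow B"

lemma ssums_insert:
  assumes "finite B" "a \<notin> B"
  shows "ssums (insert a B) = ssums B \<union> (\<lambda>y. a + y) ` ssums B"
proof
  show "ssums (insert a B) \<subseteq> ssums B \<union> (\<lambda>y. a + y) ` ssums B"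
  proof
    fix z assume "z \<in> ssums (insert a B)"
    then obtain S where S: "S \<subseteq> insert a B" "z = \<Sum>S" unfolding ssums_def by blast
    have fS: "finite S" using S(1) assms(1) finite_subset by blast
    show "z \<in> ssums B \<union> (\<lambda>y. a + y) ` ssums B"
    proof (cases "a \<in> S")
      case True
      have "z = a + \<Sum>(S - {a})" using S(2) fS True by (simp add: sum.remove)
      moreover have "S - {a} \<subseteq> B" using S(1) by auto
      ultimately show ?thesis unfolding ssums_def by blast
    next
      case False
      then have "S \<subseteq> B" using S(1) by auto
      then show ?thesis using S(2) unfolding ssums_def by blast
    qed
  qed
next
  show "ssums B \<union> (\<lambda>y. a + y) ` ssums B \<subseteq> ssums (insert a B)"
  proof
    fix z assume "z \<in> ssums B \<union> (\<lambda>y. a + y) ` ssums B"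
    then show "z \<in> ssums (insert a B)"
    proof
      assume "z \<in> ssums B" then show ?thesis unfolding ssums_def by auto
    next
      assume "z \<in> (\<lambda>y. a + y) ` ssums B"
      then obtain T where T: "T \<subseteq> B" "z = a + \<Sum>T" unfolding ssums_def by blast
      have "a \<notin> T" using T(1) assms(2) by auto
      moreover have "finite T" using T(1) assms(1) finite_subset by blast
      ultimately have "z = \<Sum>(insert a T)" using T(2) by simp
      moreover have "insert a T \<subseteq> insert a B" using T(1) by auto
      ultimately show ?thesis unfolding ssums_def by blast
    qed
  qed
qed

lemma ssums_pow2:
  fixes B :: "'a::field set"
  assumes "finite B" and two: "(2::'a) = 0"
  shows "(\<exists>k. card (ssums B) = 2 ^ k) \<and> (\<forall>x\<in>ssums B. \<forall>y\<in>ssums B. x + y \<in> ssums B)"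
  using assms(1)
proof (induction B rule: finite_induct)
  case empty
  then show ?case by (simp add: ssums_def) (rule exI[of _ 0], simp)
next
  case (insert a B)
  have xx: "x + x = 0" for x :: 'a
    by (metis mult_2 two mult_zero_left)
  obtain k where k: "card (ssums B) = 2 ^ k" using insert.IH by blast
  have cl: "\<forall>x\<in>ssums B. \<forall>y\<in>ssums B. x + y \<in> ssums B" using insert.IH by blast
  have fs: "finite (ssums B)" unfolding ssums_def using insert.hyps(1) by simp
  have eq: "ssums (insert a B) = ssums B \<union> (\<lambda>y. a + y) ` ssums B"
    by (rule ssums_insert[OF insert.hyps(1,2)])
  have card: "\<exists>k. card (ssums (insert a B)) = 2 ^ k"
  proof (cases "a \<in> ssums B")
    case True
    then have "(\<lambda>y. a + y) ` ssums B \<subseteq> ssums B" using cl by auto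
    then have "ssums (insert a B) = ssums B" unfolding eq by auto
    then show ?thesis using k by auto
  next
    case False
    have disj: "ssums B \<inter> (\<lambda>y. a + y) ` ssums B = {}"
    proof (rule ccontr)
      assume "ssums B \<inter> (\<lambda>y. a + y) ` ssums B \<noteq> {}"
      then obtain y where y: "y \<in> ssums B" "a + y \<in> ssums B" by auto
      have "(a + y) + y = a" by (metis add.assoc xx add_0_right)
      then have "a \<in> ssums B" using cl y by metis
      then show False using False by simp
    qed
    have "card ((\<lambda>y. a + y) ` ssums B) = card (ssums B)" by (rule card_image) (simp add: inj_on_def)
    then have "card (ssums (insert a B)) = 2 ^ Suc k"
      unfolding eq using card_Un_disjoint[OF fs _ disj] fs k by simp
    then show ?thesis by blast
  qed
  have "\<forall>x\<in>ssums (insert a B). \<forall>y\<in>ssums (insert a B). x + y \<in> ssums (insert a B)"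
  proof (intro ballI)
    fix x y assume "x \<in> ssums (insert a B)" "y \<in> ssums (insert a B)"
    then have x: "x \<in> ssums B \<or> (\<exists>x'\<in>ssums B. x = a + x')" and y: "y \<in> ssums B \<or> (\<exists>y'\<in>ssums B. y = a + y')"
      unfolding eq by auto
    have aa: "(a + x') + (a + y') = x' + y'" for x' y' :: 'a
      by (metis (no_types, lifting) add.assoc add.commute xx add_0_left)
    show "x + y \<in> ssums (insert a B)" unfolding eq
      using x y cl aa by (auto simp: add.assoc add.left_commute)
  qed
  then show ?case using card by blast
qed

lemma char2_card:
  assumes fin: "finite (UNIV :: 'a::field set)" and two: "(2::'a) = 0"
  shows "\<exists>k. card (UNIV :: 'a set) = 2 ^ k"
proof -
  have "ssums (UNIV :: 'a set) = UNIV"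
  proof (rule set_eqI, rule iffI)
    fix x :: 'a show "x \<in> ssums UNIV" unfolding ssums_def by (rule image_eqI[of _ _ "{x}"]) auto
  qed simp
  then show ?thesis using ssums_pow2[OF fin two] by metis
qed




lemma poly_vpoly_0: "poly (vpoly :: 'a::field poly) 0 = 0" by (simp add: vpoly_def)
lemma poly_vpoly_1: "poly (vpoly :: 'a::field poly) 1 = 0" by (simp add: vpoly_def)

lemma poly_mod_root:
  assumes "poly (q::'a::field poly) a = 0"
  shows "poly (p mod q) a = poly p a"
proof -
  have "p = q * (p div q) + p mod q" by simp
  then have "poly p a = poly q a * poly (p div q) a + poly (p mod q) a"
    by (metis poly_add poly_mult)
  then show ?thesis using assms by simp
qed

definition ev0 :: "(nat \<Rightarrow> 'a::field poly) \<Rightarrow> nat \<Rightarrow> 'a" where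
  "ev0 x = (\<lambda>i. poly (x i) 0)"

lemma ev0_shift: "ev0 (cyc_shift n x) = cyc_shift n (ev0 x)"
  by (auto simp: ev0_def cyc_shift_def fun_eq_iff)

lemma degree_vpoly: "degree (vpoly :: 'a::field poly) = 3" by (simp add: vpoly_def)

theorem R_to_F:
  fixes C :: "(nat \<Rightarrow> 'a::field poly) set"
  assumes lc: "linear_code n C" and cy: "cyclic_code n C" and sd: "self_dual n C"
  shows "ev0 ` C = fdual n (ev0 ` C) \<and> (\<forall>x\<in>ev0 ` C. cyc_shift n x \<in> ev0 ` C)"
proof -
  have Cw: "C \<subseteq> words n" using lc unfolding linear_code_def by blast
  have Cd: "C = dual_code n C" using sd unfolding self_dual_def .
  have orth: "inner n x y = 0" if "x \<in> C" "y \<in> C" for x y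
    using that Cd unfolding dual_code_def by blast
  have finev: "fin n (ev0 x) (ev0 y) = poly (inner n x y) 0" for x y :: "nat \<Rightarrow> 'a poly"
    unfolding fin_def ev0_def inner_def by (simp add: poly_mod_root[OF poly_vpoly_0] poly_sum)
  have sub1: "ev0 ` C \<subseteq> fdual n (ev0 ` C)"
  proof
    fix a assume "a \<in> ev0 ` C"
    then obtain x where x: "x \<in> C" "a = ev0 x" by blast
    have "a \<in> fw n" using x Cw by (auto simp: fw_def words_def ev0_def)
    moreover have "\<forall>b\<in>ev0 ` C. fin n a b = 0"
      using x orth finev by auto
    ultimately show "a \<in> fdual n (ev0 ` C)" unfolding fdual_def by blast
  qed
  have sub2: "fdual n (ev0 ` C) \<subseteq> ev0 ` C"
  proof
    fix a assume a: "a \<in> fdual n (ev0 ` C)"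
    define e :: "'a poly" where "e = [:1,0,-1:]"
    define x where "x = (\<lambda>i. smult (a i) e)"
    have afw: "a \<in> fw n" using a unfolding fdual_def by blast
    have xw: "x \<in> words n"
    proof -
      have "degree (smult (a i) e) < 3" for i
        using degree_smult_le[of "a i" e] by (simp add: e_def)
      then show ?thesis using afw by (auto simp: words_def Rset_def x_def fw_def)
    qed
    have "x \<in> dual_code n C"
      unfolding dual_code_def
    proof (intro CollectI conjI ballI xw)
      fix y assume y: "y \<in> C"
      define f where "f = (\<Sum>i<n. smult (a i) (y i))"
      have sumeq: "(\<Sum>i<n. x i * y i) = e * f"
        unfolding x_def f_def by (simp add: sum_distrib_left algebra_simps)
      have "poly f 0 = fin n a (ev0 y)"
        unfolding f_def fin_def ev0_def by (simp add: poly_sum)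
      also have "\<dots> = 0" using a y unfolding fdual_def by blast
      finally have "[:0,1:] dvd f" using poly_eq_0_iff_dvd[of f 0] by simp
      then obtain f' where f': "f = [:0,1:] * f'" by (elim dvdE)
      have "e * [:0,1:] = - vpoly" by (simp add: e_def vpoly_def)
      then have "e * f = vpoly * (- f')" unfolding f' by (metis minus_mult_commute mult.assoc)
      then have "vpoly dvd e * f" by simp
      then show "inner n x y = 0" unfolding inner_def sumeq by simp
    qed
    then have "x \<in> C" using Cd by simp
    moreover have "ev0 x = a" by (simp add: ev0_def x_def e_def fun_eq_iff)
    ultimately show "a \<in> ev0 ` C" by blast
  qed
  have "\<forall>x\<in>ev0 ` C. cyc_shift n x \<in> ev0 ` C"
    using cy unfolding cyclic_code_def by (auto simp: ev0_shift[symmetric])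
  then show ?thesis using sub1 sub2 by blast
qed




lemma mod2: "(a::nat) < 2 * n \<Longrightarrow> a mod n = (if a < n then a else a - n)"
  by (simp add: le_mod_geq)

lemma idx_swap:
  fixes k i h n :: nat
  assumes "n = 2 * h" "h > 0" "k < n" "i < n"
  shows "((k + h) mod n = i \<or> (k + h) mod n = (i + h) mod n) \<longleftrightarrow> (k = i \<or> k = (i + h) mod n)"
proof -
  have a: "(k + h) mod n = (if k + h < n then k + h else k + h - n)" using assms by (intro mod2) auto
  have b: "(i + h) mod n = (if i + h < n then i + h else i + h - n)" using assms by (intro mod2) auto
  show ?thesis unfolding a b using assms by (auto split: if_splits)
qed

lemma idx_shift:
  fixes i h n :: nat
  assumes "n = 2 * h" "h > 0" "i < n"
  shows "((i + h) mod n + n - 1) mod n = ((i + n - 1) mod n + h) mod n"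
proof -
  have a: "(i + h) mod n = (if i + h < n then i + h else i + h - n)" using assms by (intro mod2) auto
  have b: "(i + n - 1) mod n = (if i + n - 1 < n then i + n - 1 else i + n - 1 - n)" using assms by (intro mod2) auto
  have c: "((i + h) mod n + n - 1) mod n = (if (i + h) mod n + n - 1 < n then (i + h) mod n + n - 1 else (i + h) mod n + n - 1 - n)"
    using assms a by (intro mod2) auto
  have d: "((i + n - 1) mod n + h) mod n = (if (i + n - 1) mod n + h < n then (i + n - 1) mod n + h else (i + n - 1) mod n + h - n)"
    using assms b by (intro mod2) auto
  show ?thesis unfolding c d unfolding a b using assms by auto
qed

lemma sum_half:
  fixes f :: "nat \<Rightarrow> 'a::comm_monoid_add"
  shows "(\<Sum>i<h + k. f i) = (\<Sum>i<h. f i) + (\<Sum>i<k. f (i + h))"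
  by (induction k) (simp_all add: ac_simps)

definition Ccon :: "nat \<Rightarrow> nat \<Rightarrow> (nat \<Rightarrow> 'a::field poly) set" where
  "Ccon n h = {x \<in> words n. \<forall>i<n. poly (x i) 1 = 0 \<and> poly (x i) 0 = poly (x ((i + h) mod n)) 0}"

lemma vpoly_char2:
  assumes two: "(2::'a::field) = 0"
  shows "(vpoly :: 'a poly) = [:0,1:] * [:-1,1:]^2"
proof -
  have m1: "-1 = (1::'a)" using two by (metis add_eq_0_iff one_add_one)
  have m2: "-2 = (0::'a)" using two by simp
  show ?thesis unfolding vpoly_def by (simp add: power2_eq_square m1 m2 two)
qed

lemma deg_mod_vpoly: "degree ((p::'a::field poly) mod vpoly) < 3"
proof -
  have "vpoly \<noteq> (0::'a poly)" using degree_vpoly[where 'a='a] by auto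
  from degree_mod_less[OF this, of p] show ?thesis using degree_vpoly[where 'a='a] by auto
qed

lemma con_linear:
  "linear_code n (Ccon n h :: (nat \<Rightarrow> 'a::field poly) set)"
  unfolding linear_code_def
proof (intro conjI ballI)
  show "Ccon n h \<subseteq> words n" unfolding Ccon_def by blast
  show "(\<lambda>i. 0) \<in> (Ccon n h :: (nat \<Rightarrow> 'a poly) set)" by (simp add: Ccon_def words_def Rset_def)
next
  fix x y :: "nat \<Rightarrow> 'a poly" assume x: "x \<in> Ccon n h" and y: "y \<in> Ccon n h"
  have xw: "\<forall>i<n. degree (x i) < 3" "\<forall>i\<ge>n. x i = 0"
    "\<forall>i<n. poly (x i) 1 = 0 \<and> poly (x i) 0 = poly (x ((i+h) mod n)) 0"
    using x unfolding Ccon_def words_def Rset_def by blast+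
  have yw: "\<forall>i<n. degree (y i) < 3" "\<forall>i\<ge>n. y i = 0"
    "\<forall>i<n. poly (y i) 1 = 0 \<and> poly (y i) 0 = poly (y ((i+h) mod n)) 0"
    using y unfolding Ccon_def words_def Rset_def by blast+
  show "(\<lambda>i. x i + y i) \<in> Ccon n h"
    unfolding Ccon_def words_def Rset_def mem_Collect_eq
  proof (intro conjI allI impI)
    fix i assume i: "i < n"
    have "degree (x i) \<le> 2" "degree (y i) \<le> 2" using xw yw i by auto
    then show "degree (x i + y i) < 3" using degree_add_le[of "x i" 2 "y i"] by linarith
    show "poly (x i + y i) 1 = 0" using xw(3) yw(3) i by simp
    have "poly (x i) 0 = poly (x ((i+h) mod n)) 0" "poly (y i) 0 = poly (y ((i+h) mod n)) 0"
      using xw(3) yw(3) i by blast+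
    then show "poly (x i + y i) 0 = poly (x ((i + h) mod n) + y ((i + h) mod n)) 0"
      by (simp only: poly_add)
  next
    fix i assume "n \<le> i" then show "x i + y i = 0" using xw yw by simp
  qed
next
  fix r :: "'a poly" and x :: "nat \<Rightarrow> 'a poly" assume r: "r \<in> Rset" and x: "x \<in> Ccon n h"
  have "(\<lambda>i. rmul r (x i)) \<in> words n"
    using x deg_mod_vpoly by (auto simp: Ccon_def words_def Rset_def rmul_def)
  moreover have "\<forall>i<n. poly (rmul r (x i)) 1 = 0 \<and> poly (rmul r (x i)) 0 = poly (rmul r (x ((i + h) mod n))) 0"
  proof (intro allI impI conjI)
    fix i assume i: "i < n"
    have a: "poly (x i) 1 = 0" "poly (x i) 0 = poly (x ((i+h) mod n)) 0"
      using x i unfolding Ccon_def by blast+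
    show "poly (rmul r (x i)) 1 = 0" using a(1)
      by (simp add: rmul_def poly_mod_root[OF poly_vpoly_1])
    show "poly (rmul r (x i)) 0 = poly (rmul r (x ((i + h) mod n))) 0"
      unfolding rmul_def poly_mod_root[OF poly_vpoly_0] poly_mult a(2) ..
  qed
  ultimately show "(\<lambda>i. rmul r (x i)) \<in> Ccon n h" unfolding Ccon_def by blast
qed

lemma con_cyclic:
  assumes n: "n > 0" "n = 2 * h"
  shows "cyclic_code n (Ccon n h :: (nat \<Rightarrow> 'a::field poly) set)"
  unfolding cyclic_code_def
proof
  fix x :: "nat \<Rightarrow> 'a poly" assume x: "x \<in> Ccon n h"
  have nh: "n = 2 * h" "h > 0" using n by auto
  have xw: "x \<in> words n" and xc: "\<forall>i<n. poly (x i) 1 = 0 \<and> poly (x i) 0 = poly (x ((i + h) mod n)) 0"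
    using x unfolding Ccon_def by blast+
  have "cyc_shift n x \<in> words n"
    unfolding words_def
  proof (intro CollectI conjI allI impI)
    fix i assume "i < n"
    have "(i + n - 1) mod n < n" using n by simp
    then show "cyc_shift n x i \<in> Rset" using xw \<open>i < n\<close> by (simp add: words_def cyc_shift_def)
  next
    fix i assume "n \<le> i" then show "cyc_shift n x i = 0" by (simp add: cyc_shift_def)
  qed
  moreover have "\<forall>i<n. poly (cyc_shift n x i) 1 = 0 \<and> poly (cyc_shift n x i) 0 = poly (cyc_shift n x ((i + h) mod n)) 0"
  proof (intro allI impI)
    fix i assume i: "i < n"
    define j where "j = (i + n - 1) mod n"
    have j: "j < n" using n j_def by simp
    have s1: "cyc_shift n x i = x j" using i by (simp add: cyc_shift_def j_def)
    have "(i + h) mod n < n" using n by simp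
    then have s2: "cyc_shift n x ((i + h) mod n) = x ((j + h) mod n)"
      using idx_shift[OF nh i] by (simp add: cyc_shift_def j_def)
    show "poly (cyc_shift n x i) 1 = 0 \<and> poly (cyc_shift n x i) 0 = poly (cyc_shift n x ((i + h) mod n)) 0"
      unfolding s1 s2 using xc j by blast
  qed
  ultimately show "cyc_shift n x \<in> Ccon n h" unfolding Ccon_def by blast
qed


lemma char2_facts:
  assumes two: "(2::'a::field) = 0"
  shows "-1 = (1::'a)" "(x::'a) + x = 0" "x + y = 0 \<Longrightarrow> x = (y::'a)"
proof -
  show m1: "-1 = (1::'a)" using two by (metis add_eq_0_iff one_add_one)
  show xx: "x + x = 0" by (metis mult_2 two mult_zero_left)
  show "x + y = 0 \<Longrightarrow> x = y"
  proof -
    assume "x + y = 0"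
    then have "x = - y" by (simp add: eq_neg_iff_add_eq_0)
    also have "- y = (-1) * y" by simp
    also have "\<dots> = y" using m1 by simp
    finally show "x = y" .
  qed
qed

lemma con_sub_dual:
  assumes two: "(2::'a::field) = 0" and nh: "n = 2 * h" "h > 0"
    and x: "x \<in> (Ccon n h :: (nat \<Rightarrow> 'a poly) set)" and y: "y \<in> Ccon n h"
  shows "inner n x y = 0"
proof -
  define L :: "'a poly" where "L = [:-1,1:]"
  have dx: "x i = L * (x i div L)" if "i < n" for i
  proof -
    have "poly (x i) 1 = 0" using x that unfolding Ccon_def by blast
    then have "L dvd x i" using poly_eq_0_iff_dvd[of "x i" 1] by (simp add: L_def)
    then show ?thesis by simp
  qed
  have dy: "y i = L * (y i div L)" if "i < n" for i
  proof -
    have "poly (y i) 1 = 0" using y that unfolding Ccon_def by blast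
    then have "L dvd y i" using poly_eq_0_iff_dvd[of "y i" 1] by (simp add: L_def)
    then show ?thesis by simp
  qed
  define T where "T = (\<Sum>i<n. (x i div L) * (y i div L))"
  have ST: "(\<Sum>i<n. x i * y i) = L^2 * T"
  proof -
    have "(\<Sum>i<n. x i * y i) = (\<Sum>i<n. L^2 * ((x i div L) * (y i div L)))"
    proof (rule sum.cong[OF refl])
      fix i assume "i \<in> {..<n}"
      then have "x i * y i = (L * (x i div L)) * (L * (y i div L))" using dx dy by simp
      then show "x i * y i = L^2 * ((x i div L) * (y i div L))" by (simp add: power2_eq_square ac_simps)
    qed
    then show ?thesis unfolding T_def by (simp add: sum_distrib_left)
  qed
  define f where "f i = poly (x i) 0 * poly (y i) 0" for i
  have fh: "f (i + h) = f i" if "i < h" for i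
  proof -
    have "(i + h) mod n = i + h" using that nh by simp
    moreover have "i < n" using that nh by simp
    ultimately have "poly (x i) 0 = poly (x (i + h)) 0" "poly (y i) 0 = poly (y (i + h)) 0"
      using x y unfolding Ccon_def by (metis (mono_tags, lifting) mem_Collect_eq)+
    then show ?thesis unfolding f_def by simp
  qed
  have "poly (\<Sum>i<n. x i * y i) 0 = (\<Sum>i<n. f i)" unfolding f_def by (simp add: poly_sum)
  also have "\<dots> = (\<Sum>i<h. f i) + (\<Sum>i<h. f (i + h))" unfolding nh(1) mult_2 by (rule sum_half)
  also have "(\<Sum>i<h. f (i + h)) = (\<Sum>i<h. f i)" by (rule sum.cong) (simp_all add: fh)
  also have "(\<Sum>i<h. f i) + (\<Sum>i<h. f i) = (\<Sum>i<h. f i + f i)" by (simp only: sum.distrib)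
  also have "\<dots> = 0" by (simp add: char2_facts(2)[OF two])
  finally have p0: "poly (L^2 * T) 0 = 0" unfolding ST .
  have "poly (L^2) 0 = 1" by (simp add: L_def)
  then have "poly T 0 = 0" using p0 by simp
  then have "[:0,1:] dvd T" using poly_eq_0_iff_dvd[of T 0] by simp
  then obtain T' where T': "T = [:0,1:] * T'" by (elim dvdE)
  have "(\<Sum>i<n. x i * y i) = vpoly * T'"
    unfolding ST T' vpoly_char2[OF two] L_def by (simp add: ac_simps)
  then show ?thesis unfolding inner_def by simp
qed




lemma dual_sub_con:
  assumes two: "(2::'a::field) = 0" and nh: "n = 2 * h" "h > 0"
    and x: "x \<in> dual_code n (Ccon n h :: (nat \<Rightarrow> 'a poly) set)"
  shows "x \<in> Ccon n h"
proof -
  have m1: "-1 = (1::'a)" by (rule char2_facts(1)[OF two])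
  have xw: "x \<in> words n" and xo: "\<And>y. y \<in> Ccon n h \<Longrightarrow> inner n x y = 0"
    using x unfolding dual_code_def by blast+
  have "\<forall>i<n. poly (x i) 1 = 0 \<and> poly (x i) 0 = poly (x ((i + h) mod n)) 0"
  proof (intro allI impI conjI)
    fix i assume i: "i < n"
    define t :: "'a poly" where "t = [:0,1,1:]"
    define y1 where "y1 = (\<lambda>k. if k = i then t else 0)"
    have y1C: "y1 \<in> Ccon n h"
      unfolding Ccon_def words_def Rset_def mem_Collect_eq
    proof (intro conjI allI impI)
      fix k assume "k < n"
      show "degree (y1 k) < 3" by (simp add: y1_def t_def)
      show "poly (y1 k) 1 = 0" by (simp add: y1_def t_def two)
      show "poly (y1 k) 0 = poly (y1 ((k + h) mod n)) 0" by (simp add: y1_def t_def)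
    next
      fix k assume "n \<le> k" then show "y1 k = 0" using i by (simp add: y1_def)
    qed
    have "(\<Sum>k<n. x k * y1 k) = x i * t"
      unfolding y1_def using i by (simp add: if_distrib[of "\<lambda>z. x _ * z"] cong: if_cong)
    then have "vpoly dvd x i * t" using xo[OF y1C] unfolding inner_def by (simp add: dvd_eq_mod_eq_0)
    moreover have "t = [:0,1:] * [:-1,1:]" unfolding t_def using m1 by simp
    ultimately have "[:-1,1:] * ([:0,1:] * [:-1,1:]) dvd x i * ([:0,1:] * [:-1,1::'a:])"
      unfolding vpoly_char2[OF two] by (simp add: power2_eq_square ac_simps)
    then have "[:-1,1:] dvd x i" by (simp only: dvd_mult_cancel_right) simp
    then show "poly (x i) 1 = 0" using poly_eq_0_iff_dvd[of "x i" 1] by simp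
  next
    fix i assume i: "i < n"
    define j where "j = (i + h) mod n"
    have j: "j < n" using i nh by (simp add: j_def)
    have ij: "i \<noteq> j"
    proof -
      have "j = (if i + h < n then i + h else i + h - n)" unfolding j_def using i nh by (intro mod2) auto
      then show ?thesis using nh i by auto
    qed
    define e :: "'a poly" where "e = [:1,0,1:]"
    define y2 where "y2 = (\<lambda>k. if k = i \<or> k = j then e else 0)"
    have y2C: "y2 \<in> Ccon n h"
      unfolding Ccon_def words_def Rset_def mem_Collect_eq
    proof (intro conjI allI impI)
      fix k assume k: "k < n"
      show "degree (y2 k) < 3" by (simp add: y2_def e_def)
      show "poly (y2 k) 1 = 0" by (simp add: y2_def e_def two)
      have "((k + h) mod n = i \<or> (k + h) mod n = j) \<longleftrightarrow> (k = i \<or> k = j)"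
        unfolding j_def by (rule idx_swap[OF nh k i])
      then show "poly (y2 k) 0 = poly (y2 ((k + h) mod n)) 0" by (simp add: y2_def e_def)
    next
      fix k assume "n \<le> k" then show "y2 k = 0" using i j by (simp add: y2_def)
    qed
    have "(\<Sum>k<n. x k * y2 k) = (\<Sum>k<n. (if k = i then x k * e else 0) + (if k = j then x k * e else 0))"
      by (rule sum.cong) (use ij in \<open>auto simp: y2_def\<close>)
    also have "\<dots> = x i * e + x j * e" using i j by (simp add: sum.distrib)
    finally have "vpoly dvd x i * e + x j * e"
      using xo[OF y2C] unfolding inner_def by (simp add: dvd_eq_mod_eq_0)
    then have "poly (x i * e + x j * e) 0 = 0"
      using poly_vpoly_0 by (metis dvdE mult_eq_0_iff poly_mult)
    then have "poly (x i) 0 + poly (x j) 0 = 0" by (simp add: e_def)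
    then show "poly (x i) 0 = poly (x ((i + h) mod n)) 0"
      using char2_facts(3)[OF two] unfolding j_def by blast
  qed
  then show ?thesis using xw unfolding Ccon_def by blast
qed

theorem construction:
  assumes two: "(2::'a::field) = 0" and n: "n > 0" "even n"
  shows "\<exists>C :: (nat \<Rightarrow> 'a poly) set. linear_code n C \<and> cyclic_code n C \<and> self_dual n C"
proof -
  define h where "h = n div 2"
  have nh: "n = 2 * h" "h > 0" using n h_def by auto
  have "self_dual n (Ccon n h :: (nat \<Rightarrow> 'a poly) set)"
    unfolding self_dual_def
  proof
    show "Ccon n h \<subseteq> dual_code n (Ccon n h :: (nat \<Rightarrow> 'a poly) set)"
      unfolding dual_code_def
      using con_sub_dual[OF two nh] by (auto simp: Ccon_def)
    show "dual_code n (Ccon n h) \<subseteq> (Ccon n h :: (nat \<Rightarrow> 'a poly) set)"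
      using dual_sub_con[OF two nh] by blast
  qed
  then show ?thesis using con_linear con_cyclic[OF n(1) nh(1)] by blast
qed


theorem corollary11:
  fixes n :: nat
  assumes "n > 0"
  shows "(\<exists>C :: (nat \<Rightarrow> 'a::{field,finite} poly) set.
            linear_code n C \<and> cyclic_code n C \<and> self_dual n C)
         \<longleftrightarrow> ((\<exists>k::nat. card (UNIV :: 'a set) = 2 ^ k) \<and> even n)"
proof
  assume "\<exists>C :: (nat \<Rightarrow> 'a poly) set. linear_code n C \<and> cyclic_code n C \<and> self_dual n C"
  then obtain C :: "(nat \<Rightarrow> 'a poly) set" where C: "linear_code n C" "cyclic_code n C" "self_dual n C"
    by blast
  have fin: "finite (UNIV :: 'a set)" by simp
  from R_to_F[OF C] have "ev0 ` C = fdual n (ev0 ` C)" "\<forall>x\<in>ev0 ` C. cyc_shift n x \<in> ev0 ` C"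
    by blast+
  from field_level[OF assms fin this] have ch: "CHAR('a) = 2" and ev: "even n" by blast+
  have "(2::'a) = 0" using of_nat_CHAR[where 'a='a] ch by simp
  then show "(\<exists>k::nat. card (UNIV :: 'a set) = 2 ^ k) \<and> even n"
    using char2_card[OF fin] ev by blast
next
  assume a: "(\<exists>k::nat. card (UNIV :: 'a set) = 2 ^ k) \<and> even n"
  have fin: "finite (UNIV :: 'a set)" by simp
  from a obtain k where "card (UNIV :: 'a set) = 2 ^ k" by blast
  then have "(2::'a) = 0" by (rule card_pow2_char[OF fin])
  then show "\<exists>C :: (nat \<Rightarrow> 'a poly) set. linear_code n C \<and> cyclic_code n C \<and> self_dual n C"
    using construction[OF _ assms] a by blast
qed

end
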